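(* Let $0<\mu\le L$, $f\in\mathcal S^2_{\mu,L}(\mathbb R^n)$ with minimizer $x^*$, $\beta\in[0,1]$, $x_0\in\mathbb R^n$, and step size $0<s\le 1/L$. Let $X$ be the solution of the $\beta$-High Resolution ODE $$\ddot X+2\sqrt\mu\,\dot X+\beta\sqrt s\,\nabla^2 f(X)\dot X+(1+\sqrt{\mu s})\nabla f(X)=0,\quad X(0)=x_0,\ \dot X(0)=-\frac{2\sqrt s\,\nabla f(x_0)}{1+\sqrt{\mu s}}.$$ Then for all $t\ge0$, $$f(X(t))-f(x^* )\le\frac{3+(2-\beta)^2}{2s}\|x_0-x^*\|^2 e^{-\frac{\sqrt\mu}{4}t}.$$
   Context: $\mathcal S^2_{\mu,L}(\mathbb R^n)$ is the class of twice differentiable, $\mu$-strongly convex functions $f:\mathbb R^n\to\mathbb R$ (i.e. $f(y)\ge f(x)+\langle\nabla f(x),y-x\rangle+\frac\mu2\|y-x\|^2$) whose gradient is $L$-Lipschitz and whose Hessian is Lipschitz in Frobenius norm ($\|\nabla^2f(x)-\nabla^2f(y)\|_F\le L'\|x-y\|$ for some $L'>0$). *)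

theory Defs
  imports "HOL-Analysis.Analysis"
begin

text \<open>The gradient g and Hessian H of f are given
explicitly; they are uniquely determined by the derivative conditions.
The norm on real^'n^'n is the Euclidean norm of all entries, i.e. the
Frobenius norm.\<close>

definition S2_class ::
  "real \<Rightarrow> real \<Rightarrow> (real^'n \<Rightarrow> real) \<Rightarrow> (real^'n \<Rightarrow> real^'n)
   \<Rightarrow> (real^'n \<Rightarrow> real^'n^'n) \<Rightarrow> bool" where
  "S2_class mu L f g H \<longleftrightarrow>
     (\<forall>x. (f has_derivative (\<lambda>h. g x \<bullet> h)) (at x)) \<and>
     (\<forall>x. (g has_derivative (\<lambda>h. H x *v h)) (at x)) \<and>
     (\<forall>x y. f y \<ge> f x + g x \<bullet> (y - x) + mu / 2 * (norm (y - x))\<^sup>2) \<and>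
     (\<forall>x y. norm (g x - g y) \<le> L * norm (x - y)) \<and>
     (\<exists>L'>0. \<forall>x y. norm (H x - H y) \<le> L' * norm (x - y))"

end

theory Submission
  imports Defs
begin



lemma strong_mono:
  assumes "S2_class mu L f g H"
  shows "(g x - g y) \<bullet> (x - y) \<ge> mu * (norm (x - y))\<^sup>2"
proof -
  have c: "\<forall>x y. f y \<ge> f x + g x \<bullet> (y - x) + mu / 2 * (norm (y - x))\<^sup>2"
    using assms unfolding S2_class_def by blast
  have 1: "f y \<ge> f x + g x \<bullet> (y - x) + mu / 2 * (norm (y - x))\<^sup>2" using c by blast
  have 2: "f x \<ge> f y + g y \<bullet> (x - y) + mu / 2 * (norm (x - y))\<^sup>2" using c by blast
  have "norm (y - x) = norm (x - y)" by (simp add: norm_minus_commute)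
  moreover have "g x \<bullet> (y - x) = - (g x \<bullet> (x - y))" by (simp add: inner_diff_right)
  ultimately show ?thesis using 1 2 by (simp add: inner_diff_left)
qed

lemma hess_psd:
  assumes "S2_class mu L f g H" "0 < mu"
  shows "(H x *v v) \<bullet> v \<ge> 0"
proof (rule ccontr)
  assume neg: "\<not> ?thesis"
  have gd: "(g has_derivative (\<lambda>h. H y *v h)) (at y)" for y
    using assms unfolding S2_class_def by blast
  have D1: "((\<lambda>h. g (x + h *\<^sub>R v) \<bullet> v) has_derivative (\<lambda>h. (H (x + 0 *\<^sub>R v) *v (0 + h *\<^sub>R v)) \<bullet> v)) (at (0::real))"
    by (rule has_derivative_inner_left, rule has_derivative_compose[OF _ gd], auto intro!: derivative_eq_intros)
  then have "((\<lambda>h. g (x + h *\<^sub>R v) \<bullet> v) has_real_derivative ((H x *v v) \<bullet> v)) (at 0)"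
  proof -
    have e: "(\<lambda>h::real. h * ((H x *v v) \<bullet> v)) = (*) ((H x *v v) \<bullet> v)" by (auto simp: mult.commute)
    show ?thesis using D1
    by (simp add: has_field_derivative_def matrix_vector_mult_scaleR e)
  qed
  then obtain d where d: "d > 0" "\<forall>h>0. h < d \<longrightarrow> g (x + 0 *\<^sub>R v) \<bullet> v > g (x + (0 + h) *\<^sub>R v) \<bullet> v"
    using DERIV_neg_dec_right neg by (metis (no_types, lifting) not_le)
  define h where "h = d / 2"
  have h: "h > 0" "h < d" using d by (auto simp: h_def)
  have "g (x + h *\<^sub>R v) \<bullet> v < g x \<bullet> v" using d h by auto
  moreover have "(g (x + h *\<^sub>R v) - g x) \<bullet> ((x + h *\<^sub>R v) - x) \<ge> 0"
    using strong_mono[OF assms(1), of "x + h *\<^sub>R v" x] assms(2)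
    by (smt (verit) mult_nonneg_nonneg zero_le_power2)
  then have "h * ((g (x + h *\<^sub>R v) - g x) \<bullet> v) \<ge> 0" by (simp add: inner_scaleR_right)
  then have "(g (x + h *\<^sub>R v) - g x) \<bullet> v \<ge> 0" using h by (simp add: zero_le_mult_iff)
  ultimately show False by (simp add: inner_diff_left)
qed



lemma times_fun_comm: "(\<lambda>h::real. h * D) = (*) D"
  by (auto simp: mult.commute)

lemma gronwall_lin:
  fixes E E' :: "real \<Rightarrow> real"
  assumes d: "\<forall>t\<ge>0. (E has_real_derivative E' t) (at t within {0..})"
    and le: "\<forall>t\<ge>0. E' t \<le> - k * E t" and t: "t \<ge> 0"
  shows "E t \<le> E 0 * exp (- k * t)"
proof (cases "t = 0")
  case True then show ?thesis by simp
next
  case False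
  then have tp: "0 < t" using t by simp
  define F where "F s = E s * exp (k * s)" for s
  have dF: "(F has_real_derivative (E' s * exp (k * s) + E s * (k * exp (k * s)))) (at s within {0..})"
    if "s \<ge> 0" for s
    unfolding F_def using d that by (auto intro!: derivative_eq_intros)
  have cont: "continuous_on {0..t} F"
  proof -
    have "continuous (at s within {0..}) F" if "s \<in> {0..t}" for s
      using dF[of s] that DERIV_continuous by auto
    then have "continuous_on {0..} F"
      by (metis atLeastAtMost_iff atLeast_iff continuous_on_eq_continuous_within dF DERIV_continuous)
    then show ?thesis by (rule continuous_on_subset) auto
  qed
  have dFat: "(F has_derivative (\<lambda>h. h * (E' s * exp (k * s) + E s * (k * exp (k * s))))) (at s)"
    if "0 < s" "s < t" for s
  proof -
    have "s \<in> interior {0..}" using that by simp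
    then have "at s within {0..} = at s" by (rule at_within_interior)
    then show ?thesis using dF[of s] that
      by (simp add: has_field_derivative_def times_fun_comm)
  qed
  obtain xi where xi: "0 < xi" "xi < t"
    "F t - F 0 = (t - 0) * (E' xi * exp (k * xi) + E xi * (k * exp (k * xi)))"
    using mvt[OF tp cont dFat] by blast
  have "E' xi * exp (k * xi) + E xi * (k * exp (k * xi)) = (E' xi + k * E xi) * exp (k * xi)"
    by (simp add: algebra_simps)
  also have "\<dots> \<le> 0"
  proof (rule mult_nonpos_nonneg)
    show "E' xi + k * E xi \<le> 0" using le[rule_format, of xi] xi(1) by simp
  qed simp
  finally have D0: "E' xi * exp (k * xi) + E xi * (k * exp (k * xi)) \<le> 0" .
  have "t * (E' xi * exp (k * xi) + E xi * (k * exp (k * xi))) \<le> 0"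
    using D0 tp by (intro mult_nonneg_nonpos) auto
  then have "F t \<le> F 0" using xi(3) by simp
  then have "E t * exp (k * t) \<le> E 0" by (simp add: F_def)
  then have "E t * exp (k * t) * exp (- k * t) \<le> E 0 * exp (- k * t)"
    by (rule mult_right_mono) simp
  then show ?thesis by (simp add: exp_minus field_simps)
qed



lemma grad_zero:
  assumes "S2_class mu L f g H" "\<forall>y. f xs \<le> f y"
  shows "g xs = 0"
proof -
  have "(f has_derivative (\<lambda>h. g xs \<bullet> h)) (at xs)" using assms unfolding S2_class_def by blast
  then have "(\<lambda>h. g xs \<bullet> h) = (\<lambda>v. 0)"
    using differential_zero_maxmin[of xs UNIV f] assms(2) by auto
  then have "g xs \<bullet> g xs = 0" by meson
  then show ?thesis by simp
qed

lemma descent: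
  assumes "S2_class mu L f g H" "g xs = 0"
  shows "f x0 - f xs \<le> L / 2 * (norm (x0 - xs))\<^sup>2"
proof -
  let ?e = "x0 - xs"
  have fd: "(f has_derivative (\<lambda>h. g y \<bullet> h)) (at y)" for y using assms unfolding S2_class_def by blast
  have lip: "norm (g x - g y) \<le> L * norm (x - y)" for x y using assms unfolding S2_class_def by blast
  define psi where "psi t = f (xs + t *\<^sub>R ?e) - L / 2 * t\<^sup>2 * (norm ?e)\<^sup>2" for t
  have dpsi: "(psi has_derivative (\<lambda>h. h * (g (xs + t *\<^sub>R ?e) \<bullet> ?e - L * t * (norm ?e)\<^sup>2))) (at t)" for t
  proof -
    have d1: "((\<lambda>t. xs + t *\<^sub>R ?e) has_derivative (\<lambda>h. h *\<^sub>R ?e)) (at t)"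
      by (auto intro!: derivative_eq_intros)
    have d2: "((\<lambda>t. f (xs + t *\<^sub>R ?e)) has_derivative (\<lambda>h. g (xs + t *\<^sub>R ?e) \<bullet> (h *\<^sub>R ?e))) (at t)"
      using has_derivative_compose[OF d1 fd] .
    have d3': "((\<lambda>t. L / 2 * t\<^sup>2 * (norm ?e)\<^sup>2) has_real_derivative (L * t * (norm ?e)\<^sup>2)) (at t)"
      by (auto intro!: derivative_eq_intros)
    have d3: "((\<lambda>t. L / 2 * t\<^sup>2 * (norm ?e)\<^sup>2) has_derivative (\<lambda>h. h * (L * t * (norm ?e)\<^sup>2))) (at t)"
      using d3' by (simp add: has_field_derivative_def times_fun_comm)
    have "(psi has_derivative (\<lambda>h. g (xs + t *\<^sub>R ?e) \<bullet> (h *\<^sub>R ?e) - h * (L * t * (norm ?e)\<^sup>2))) (at t)"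
      unfolding psi_def by (rule has_derivative_diff[OF d2 d3])
    then show ?thesis by (simp add: algebra_simps inner_scaleR_right)
  qed
  have cont: "continuous_on {0..1} psi"
    using dpsi by (meson has_derivative_continuous continuous_at_imp_continuous_on)
  obtain xi where xi: "0 < xi" "xi < 1"
    "psi 1 - psi 0 = (1 - 0) * (g (xs + xi *\<^sub>R ?e) \<bullet> ?e - L * xi * (norm ?e)\<^sup>2)"
  proof -
    have dpsi': "\<And>x. 0 < x \<Longrightarrow> x < 1 \<Longrightarrow> (psi has_derivative (\<lambda>h. h * (g (xs + x *\<^sub>R ?e) \<bullet> ?e - L * x * (norm ?e)\<^sup>2))) (at x)"
      using dpsi by blast
    show ?thesis using mvt[OF zero_less_one cont dpsi'] that by simp blast
  qed
  have "g (xs + xi *\<^sub>R ?e) \<bullet> ?e = (g (xs + xi *\<^sub>R ?e) - g xs) \<bullet> ?e" using assms(2) by simp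
  also have "\<dots> \<le> norm (g (xs + xi *\<^sub>R ?e) - g xs) * norm ?e" by (rule norm_cauchy_schwarz)
  also have "\<dots> \<le> L * norm (xi *\<^sub>R ?e) * norm ?e"
    using lip[of "xs + xi *\<^sub>R ?e" xs] by (intro mult_right_mono) auto
  also have "\<dots> = L * xi * (norm ?e)\<^sup>2" using xi by (simp add: power2_eq_square)
  finally have "psi 1 \<le> psi 0" using xi by simp
  then show ?thesis by (simp add: psi_def)
qed



lemmas has_derivative_divide_const = bounded_linear.has_derivative[OF bounded_linear_divide]

lemma deriv_E:
  fixes f :: "real^'n \<Rightarrow> real" and g :: "real^'n \<Rightarrow> real^'n"
    and H :: "real^'n \<Rightarrow> real^'n^'n"
    and X X' X'' :: "real \<Rightarrow> real^'n" and a b c :: real and xs :: "real^'n"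
  assumes S: "S2_class mu L f g H"
    and dX: "(X has_vector_derivative X' t) (at t within {0..})"
    and dX': "(X' has_vector_derivative X'' t) (at t within {0..})"
  defines "W \<equiv> \<lambda>\<tau>. X' \<tau> + a *\<^sub>R (X \<tau> - xs) + b *\<^sub>R g (X \<tau>)"
  shows "((\<lambda>\<tau>. c * (f (X \<tau>) - f xs) + X' \<tau> \<bullet> X' \<tau> / 4 + W \<tau> \<bullet> W \<tau> / 4) has_real_derivative
      (c * (g (X t) \<bullet> X' t) + X' t \<bullet> X'' t / 2
        + W t \<bullet> (X'' t + a *\<^sub>R X' t + b *\<^sub>R (H (X t) *v X' t)) / 2)) (at t within {0..})"
proof -
  have fd: "(f has_derivative (\<lambda>h. g y \<bullet> h)) (at y)" for y using S unfolding S2_class_def by blast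
  have gd: "(g has_derivative (\<lambda>h. H y *v h)) (at y)" for y using S unfolding S2_class_def by blast
  have dX1: "(X has_derivative (\<lambda>h. h *\<^sub>R X' t)) (at t within {0..})"
    using dX by (simp add: has_vector_derivative_def)
  have dX2: "(X' has_derivative (\<lambda>h. h *\<^sub>R X'' t)) (at t within {0..})"
    using dX' by (simp add: has_vector_derivative_def)
  have dfX: "((\<lambda>\<tau>. f (X \<tau>)) has_derivative (\<lambda>h. g (X t) \<bullet> (h *\<^sub>R X' t))) (at t within {0..})"
    using has_derivative_compose[OF dX1 fd] .
  have dgX: "((\<lambda>\<tau>. g (X \<tau>)) has_derivative (\<lambda>h. H (X t) *v (h *\<^sub>R X' t))) (at t within {0..})"
    using has_derivative_compose[OF dX1 gd] .
  have dW: "(W has_derivative (\<lambda>h. h *\<^sub>R (X'' t + a *\<^sub>R X' t + b *\<^sub>R (H (X t) *v X' t)))) (at t within {0..})"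
  proof -
    have "(W has_derivative (\<lambda>h. h *\<^sub>R X'' t + a *\<^sub>R (h *\<^sub>R X' t - 0) + b *\<^sub>R (H (X t) *v (h *\<^sub>R X' t)))) (at t within {0..})"
      unfolding W_def
      by (intro has_derivative_add has_derivative_scaleR_right has_derivative_diff dX1 dX2 dgX has_derivative_const)
    then show ?thesis by (simp add: algebra_simps matrix_vector_mult_scaleR)
  qed
  define Wd where "Wd = X'' t + a *\<^sub>R X' t + b *\<^sub>R (H (X t) *v X' t)"
  have "((\<lambda>\<tau>. c * (f (X \<tau>) - f xs) + X' \<tau> \<bullet> X' \<tau> / 4 + W \<tau> \<bullet> W \<tau> / 4) has_derivative
     (\<lambda>h. c * (g (X t) \<bullet> (h *\<^sub>R X' t) - 0) + (X' t \<bullet> (h *\<^sub>R X'' t) + (h *\<^sub>R X'' t) \<bullet> X' t) / 4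
        + (W t \<bullet> (h *\<^sub>R Wd) + (h *\<^sub>R Wd) \<bullet> W t) / 4)) (at t within {0..})"
    unfolding Wd_def
    by (intro has_derivative_add has_derivative_mult_right has_derivative_diff dfX has_derivative_const
        has_derivative_divide_const has_derivative_inner dX2 dW) 
  moreover have "(\<lambda>h. c * (g (X t) \<bullet> (h *\<^sub>R X' t) - 0) + (X' t \<bullet> (h *\<^sub>R X'' t) + (h *\<^sub>R X'' t) \<bullet> X' t) / 4
        + (W t \<bullet> (h *\<^sub>R Wd) + (h *\<^sub>R Wd) \<bullet> W t) / 4) = 
     (\<lambda>h. h * (c * (g (X t) \<bullet> X' t) + X' t \<bullet> X'' t / 2 + W t \<bullet> Wd / 2))"
  proof (rule ext)
    fix h :: real
    have 1: "(h *\<^sub>R X'' t) \<bullet> X' t = h * (X' t \<bullet> X'' t)" by (simp add: inner_commute)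
    have 2: "(h *\<^sub>R Wd) \<bullet> W t = h * (W t \<bullet> Wd)" by (simp add: inner_commute)
    show "c * (g (X t) \<bullet> (h *\<^sub>R X' t) - 0) + (X' t \<bullet> (h *\<^sub>R X'' t) + (h *\<^sub>R X'' t) \<bullet> X' t) / 4
        + (W t \<bullet> (h *\<^sub>R Wd) + (h *\<^sub>R Wd) \<bullet> W t) / 4 = 
      h * (c * (g (X t) \<bullet> X' t) + X' t \<bullet> X'' t / 2 + W t \<bullet> Wd / 2)"
      unfolding 1 2 by (simp add: field_simps)
  qed
  ultimately show ?thesis
    by (simp add: has_field_derivative_def times_fun_comm Wd_def)
qed



lemma key_ineq:
  fixes V Q P F N G Wsq k sg c beta :: real
  assumes "V \<ge> 0" "Q \<ge> 0" "N \<ge> 0" "G \<ge> 0" "F \<ge> k^2 * N / 2" "P \<ge> F + k^2 * N / 2"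
    "Wsq \<le> 3 * (V + 4 * k^2 * N + beta^2 * sg^2 * G)"
    "k > 0" "sg > 0" "k * sg \<le> 1" "c = 1 + k * sg" "0 \<le> beta" "beta \<le> 1"
  shows "- k * V - beta * sg * Q / 2 - c * k * P - c * beta * sg * G / 2
     \<le> - (k / 4) * (c * F + V / 4 + Wsq / 4)"
proof -
  have c1: "c \<ge> 1" using assms by (simp add: mult_nonneg_nonneg)
  have a1: "c * k * P \<ge> c * k * (F + k^2 * N / 2)"
    using assms c1 by (intro mult_left_mono) auto
  have Fn: "F \<ge> 0" using assms by (smt (verit) divide_nonneg_pos mult_nonneg_nonneg zero_le_power2)
  have a2: "c * k * F \<ge> k * F"
  proof -
    have "1 * (k * F) \<le> c * (k * F)" using c1 Fn assms by (intro mult_right_mono) auto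
    then show ?thesis by (simp add: mult.assoc)
  qed
  have a3: "k * F \<ge> k * (k^2 * N / 2)" using assms by (intro mult_left_mono) auto
  have a4: "c * k * (k^2 * N / 2) \<ge> k * (k^2 * N / 2)"
    using c1 assms by (intro mult_right_mono) (auto intro!: mult_nonneg_nonneg)
  have a5: "k * Wsq \<le> k * (3 * (V + 4 * k^2 * N + beta^2 * sg^2 * G))"
    using assms by (intro mult_left_mono) auto
  have a6: "beta * sg * Q \<ge> 0" using assms by simp
  have bs: "beta * sg \<ge> 0" using assms by simp
  have kbs: "k * (beta * sg) \<le> 1"
    using assms by (smt (verit) mult.left_commute mult_left_le_one_le mult_nonneg_nonneg)
  have a7: "k * (beta^2 * sg^2 * G) \<le> beta * sg * G"
  proof -
    have "k * (beta^2 * sg^2 * G) = (k * (beta * sg)) * (beta * sg * G)" by (simp add: power2_eq_square algebra_simps)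
    also have "\<dots> \<le> 1 * (beta * sg * G)" using kbs bs assms by (intro mult_right_mono) auto
    finally show ?thesis by simp
  qed
  have a8: "c * beta * sg * G \<ge> beta * sg * G"
    using c1 bs assms by (metis mult.assoc mult_le_cancel_right1 mult_nonneg_nonneg not_le order.trans)
  have a9: "V * k \<ge> 0" "N * (k * k^2) \<ge> 0" "G * (beta * sg) \<ge> 0" using assms by auto
  show ?thesis using a1 a2 a3 a4 a5 a6 a7 a8 a9 assms(1)
    by (simp add: algebra_simps) 
qed



theorem theorem4p1:
  fixes f :: "real^'n \<Rightarrow> real" and g :: "real^'n \<Rightarrow> real^'n"
    and H :: "real^'n \<Rightarrow> real^'n^'n"
    and X X' X'' :: "real \<Rightarrow> real^'n"
    and mu L beta s :: real and x0 xs :: "real^'n"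
  assumes "0 < mu" and "mu \<le> L"
    and "S2_class mu L f g H"
    and "\<forall>y. f xs \<le> f y"
    and "0 \<le> beta" and "beta \<le> 1"
    and "0 < s" and "s \<le> 1 / L"
    and "\<forall>t\<ge>0. (X has_vector_derivative X' t) (at t within {0..})"
    and "\<forall>t\<ge>0. (X' has_vector_derivative X'' t) (at t within {0..})"
    and "\<forall>t\<ge>0. X'' t + (2 * sqrt mu) *\<^sub>R X' t + (beta * sqrt s) *\<^sub>R (H (X t) *v X' t)
                 + (1 + sqrt (mu * s)) *\<^sub>R g (X t) = 0"
    and "X 0 = x0"
    and "X' 0 = - ((2 * sqrt s) / (1 + sqrt (mu * s))) *\<^sub>R g x0"
  shows "\<forall>t\<ge>0. f (X t) - f xs
           \<le> (3 + (2 - beta)\<^sup>2) / (2 * s) * (norm (x0 - xs))\<^sup>2 * exp (- (sqrt mu / 4) * t)"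
proof (intro allI impI)
  fix t :: real assume t: "t \<ge> 0"
  note S = assms(3)
  define k where "k = sqrt mu"
  define sg where "sg = sqrt s"
  define c where "c = 1 + k * sg"
  have kpos: "k > 0" using assms(1) by (simp add: k_def)
  have sgpos: "sg > 0" using assms(7) by (simp add: sg_def)
  have msq: "mu = k^2" using assms(1) by (simp add: k_def)
  have ssq: "s = sg^2" using assms(7) by (simp add: sg_def)
  have sqms: "sqrt (mu * s) = k * sg" by (simp add: k_def sg_def real_sqrt_mult)
  have Lpos: "L > 0" using assms(1,2) by simp
  have Ls: "L * s \<le> 1" using assms(8) Lpos by (simp add: field_simps)
  have "mu * s \<le> L * s" using assms(2,7) by (simp add: mult_right_mono)
  then have ms1: "mu * s \<le> 1" using Ls by simp
  have ks1: "k * sg \<le> 1" using ms1 sqms by (metis real_sqrt_le_1_iff)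
  have c1: "c \<ge> 1" "c \<le> 2" using kpos sgpos ks1 by (auto simp: c_def)
  have gxs: "g xs = 0" by (rule grad_zero[OF S assms(4)])
  have conv: "\<forall>x y. f y \<ge> f x + g x \<bullet> (y - x) + mu / 2 * (norm (y - x))\<^sup>2"
    using S unfolding S2_class_def by blast
  have lip: "\<forall>x y. norm (g x - g y) \<le> L * norm (x - y)"
    using S unfolding S2_class_def by blast
  define W where "W = (\<lambda>\<tau>. X' \<tau> + (2 * k) *\<^sub>R (X \<tau> - xs) + (beta * sg) *\<^sub>R g (X \<tau>))"
  define E where "E = (\<lambda>\<tau>. c * (f (X \<tau>) - f xs) + X' \<tau> \<bullet> X' \<tau> / 4 + W \<tau> \<bullet> W \<tau> / 4)"
  define E' where "E' = (\<lambda>\<tau>. c * (g (X \<tau>) \<bullet> X' \<tau>) + X' \<tau> \<bullet> X'' \<tau> / 2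
        + W \<tau> \<bullet> (X'' \<tau> + (2 * k) *\<^sub>R X' \<tau> + (beta * sg) *\<^sub>R (H (X \<tau>) *v X' \<tau>)) / 2)"
  have dE: "\<forall>\<tau>\<ge>0. (E has_real_derivative E' \<tau>) (at \<tau> within {0..})"
  proof (intro allI impI)
    fix \<tau> :: real assume "\<tau> \<ge> 0"
    show "(E has_real_derivative E' \<tau>) (at \<tau> within {0..})"
      unfolding E_def E'_def W_def
      by (rule deriv_E[OF S]) (use assms(9,10) \<open>\<tau> \<ge> 0\<close> in auto)
  qed
  have key: "\<forall>\<tau>\<ge>0. E' \<tau> \<le> - (k / 4) * E \<tau>"
  proof (intro allI impI)
    fix \<tau> :: real assume tau: "\<tau> \<ge> 0"
    define v where "v = X' \<tau>"
    define x where "x = X \<tau>"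
    define gg where "gg = g x"
    define e where "e = x - xs"
    define Hv where "Hv = H x *v v"
    have ode: "X'' \<tau> = - ((2 * k) *\<^sub>R v + (beta * sg) *\<^sub>R Hv + c *\<^sub>R gg)"
      using assms(11)[rule_format, OF tau] unfolding v_def x_def gg_def Hv_def c_def
      by (simp add: k_def sg_def sqms[unfolded k_def sg_def] eq_neg_iff_add_eq_0 algebra_simps)
    have Wd: "X'' \<tau> + (2 * k) *\<^sub>R X' \<tau> + (beta * sg) *\<^sub>R (H (X \<tau>) *v X' \<tau>) = - c *\<^sub>R gg"
      unfolding ode by (simp add: v_def x_def Hv_def)
    have Wt: "W \<tau> = v + (2 * k) *\<^sub>R e + (beta * sg) *\<^sub>R gg"
      by (simp add: W_def v_def e_def x_def gg_def)
    have vX: "v \<bullet> X'' \<tau> = - (2 * k) * (v \<bullet> v) - (beta * sg) * (Hv \<bullet> v) - c * (gg \<bullet> v)"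
      unfolding ode by (simp add: inner_add_right inner_commute algebra_simps)
    have Wg: "W \<tau> \<bullet> gg = gg \<bullet> v + 2 * k * (e \<bullet> gg) + beta * sg * (gg \<bullet> gg)"
      unfolding Wt inner_add_left inner_scaleR_left by (simp add: inner_commute[of v gg])
    have E'eq: "E' \<tau> = - k * (v \<bullet> v) - beta * sg * (Hv \<bullet> v) / 2 - c * k * (e \<bullet> gg) - c * beta * sg * (gg \<bullet> gg) / 2"
    proof -
      have "E' \<tau> = c * (gg \<bullet> v) + v \<bullet> X'' \<tau> / 2 + W \<tau> \<bullet> (- c *\<^sub>R gg) / 2"
        unfolding E'_def Wd by (simp add: v_def gg_def x_def)
      also have "\<dots> = c * (gg \<bullet> v) + v \<bullet> X'' \<tau> / 2 - c * (W \<tau> \<bullet> gg) / 2"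
        by simp
      also have "\<dots> = - k * (v \<bullet> v) - beta * sg * (Hv \<bullet> v) / 2 - c * k * (e \<bullet> gg) - c * beta * sg * (gg \<bullet> gg) / 2"
        unfolding vX Wg by (simp add: field_simps)
      finally show ?thesis .
    qed
    have Q: "Hv \<bullet> v \<ge> 0" unfolding Hv_def by (rule hess_psd[OF S assms(1)])
    have F1: "f x - f xs \<ge> k^2 * (norm e)^2 / 2"
      using conv[rule_format, of xs x] gxs msq by (simp add: e_def)
    have P1: "e \<bullet> gg \<ge> (f x - f xs) + k^2 * (norm e)^2 / 2"
    proof -
      have "f xs \<ge> f x + gg \<bullet> (xs - x) + mu / 2 * (norm (xs - x))\<^sup>2"
        using conv[rule_format, of x xs] by (simp add: gg_def)
      moreover have "gg \<bullet> (xs - x) = - (e \<bullet> gg)" by (simp add: e_def inner_diff_right inner_commute)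
      moreover have "norm (xs - x) = norm e" by (simp add: e_def norm_minus_commute)
      ultimately show ?thesis using msq by simp
    qed
    have Wsq: "W \<tau> \<bullet> W \<tau> \<le> 3 * (v \<bullet> v + 4 * k^2 * (norm e)^2 + beta^2 * sg^2 * (gg \<bullet> gg))"
    proof -
      have n: "norm (W \<tau>) \<le> norm v + 2 * k * norm e + beta * sg * norm gg"
        unfolding Wt using kpos sgpos assms(5)
        by (smt (verit) norm_scaleR norm_triangle_ineq abs_of_nonneg mult_nonneg_nonneg)
      have "W \<tau> \<bullet> W \<tau> = (norm (W \<tau>))^2" by (simp add: power2_norm_eq_inner)
      also have "\<dots> \<le> (norm v + 2 * k * norm e + beta * sg * norm gg)^2"
        using n by (intro power_mono) auto
      also have "\<dots> \<le> 3 * ((norm v)^2 + (2 * k * norm e)^2 + (beta * sg * norm gg)^2)"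
      proof -
        have sq3: "(a + b + d)^2 \<le> 3 * (a^2 + b^2 + d^2)" for a b d :: real
        proof -
          have "0 \<le> (a - b)^2 + (b - d)^2 + (a - d)^2" by simp
          then show ?thesis by (simp add: power2_eq_square algebra_simps)
        qed
        show ?thesis by (rule sq3)
      qed
      also have "\<dots> = 3 * (v \<bullet> v + 4 * k^2 * (norm e)^2 + beta^2 * sg^2 * (gg \<bullet> gg))"
        by (simp add: power2_norm_eq_inner power_mult_distrib)
      finally show ?thesis .
    qed
    have Et: "E \<tau> = c * (f x - f xs) + v \<bullet> v / 4 + W \<tau> \<bullet> W \<tau> / 4"
      by (simp add: E_def x_def v_def)
    show "E' \<tau> \<le> - (k / 4) * E \<tau>"
      unfolding E'eq Et
      by (rule key_ineq[OF _ Q _ _ F1 P1 Wsq kpos sgpos ks1 c_def assms(5,6)]) auto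
  qed
  have gron: "E t \<le> E 0 * exp (- (k / 4) * t)"
    by (rule gronwall_lin[OF dE key t])
  have lowE: "f (X t) - f xs \<le> E t / c"
  proof -
    have "c * (f (X t) - f xs) \<le> E t" unfolding E_def by simp
    then show ?thesis using c1 by (simp add: field_simps)
  qed
  have E0: "E 0 \<le> c * ((3 + (2 - beta)\<^sup>2) / (2 * s) * (norm (x0 - xs))\<^sup>2)"
  proof -
    define e0 where "e0 = x0 - xs"
    define g0 where "g0 = g x0"
    define d where "d = norm e0"
    define a where "a = beta - 2 / c"
    define G0 where "G0 = g0 \<bullet> g0"
    define F0 where "F0 = f x0 - f xs"
    have cpos: "c > 0" using c1 by simp
    have X'0: "X' 0 = (- (2 * sg / c)) *\<^sub>R g0"
      using assms(13) sqms[unfolded sg_def] by (simp add: g0_def c_def sg_def)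
    have W0: "W 0 = (sg * a) *\<^sub>R g0 + (2 * k) *\<^sub>R e0"
      unfolding W_def X'0 using assms(12) cpos
      by (simp add: a_def g0_def e0_def algebra_simps scaleR_diff_left diff_divide_distrib)
    have V0: "X' 0 \<bullet> X' 0 = (4 * s / c^2) * G0"
      unfolding X'0 G0_def by (simp add: ssq power2_eq_square field_simps)
    have ee: "e0 \<bullet> e0 = norm e0 * norm e0" by (metis power2_eq_square power2_norm_eq_inner)
    have W0sq: "W 0 \<bullet> W 0 = sg^2 * a^2 * G0 + 4 * sg * a * k * (g0 \<bullet> e0) + 4 * k^2 * d^2"
      unfolding W0 G0_def d_def
      by (simp add: inner_add_left inner_add_right inner_commute[of e0 g0] ee
          power2_eq_square algebra_simps)
    have ge0: "g0 \<bullet> e0 \<ge> 0"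
    proof -
      have "f xs \<ge> f x0 + g0 \<bullet> (xs - x0) + mu / 2 * (norm (xs - x0))\<^sup>2"
        using conv[rule_format, of x0 xs] by (simp add: g0_def)
      moreover have "g0 \<bullet> (xs - x0) = - (g0 \<bullet> e0)" by (simp add: e0_def inner_diff_right)
      moreover have "f xs \<le> f x0" using assms(4) by simp
      ultimately show ?thesis using assms(1) by (smt (verit) mult_nonneg_nonneg zero_le_power2 divide_nonneg_pos)
    qed
    have ale: "a \<le> 0" "a^2 \<le> (2 - beta)^2"
    proof -
      have "2 / c \<ge> 1" using c1 by (simp add: field_simps)
      moreover have "2 / c \<le> 2" using c1 by (simp add: field_simps)
      ultimately have h: "0 \<le> - a" "- a \<le> 2 - beta" using assms(6) unfolding a_def by auto
      then show "a \<le> 0" by simp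
      have "(- a)^2 \<le> (2 - beta)^2" by (rule power_mono[OF h(2) h(1)])
      then show "a^2 \<le> (2 - beta)^2" by simp
    qed
    have G0le: "s^2 * G0 \<le> d^2"
    proof -
      have "norm g0 \<le> L * d" using lip[rule_format, of x0 xs] gxs by (simp add: g0_def d_def e0_def)
      then have "s * norm g0 \<le> (s * L) * d" using assms(7) by (simp add: mult_left_mono mult.assoc)
      also have "\<dots> \<le> 1 * d" using Ls by (intro mult_right_mono) (auto simp: d_def mult.commute)
      finally have "(s * norm g0)^2 \<le> d^2" using assms(7) by (intro power_mono) auto
      then show ?thesis by (simp add: G0_def power2_norm_eq_inner[symmetric] power_mult_distrib)
    qed
    have F0le: "s * F0 \<le> d^2 / 2"
    proof -
      have "F0 \<le> L / 2 * d^2" using descent[OF S gxs, of x0] by (simp add: F0_def d_def e0_def)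
      then have "s * F0 \<le> s * (L / 2 * d^2)" using assms(7) by (intro mult_left_mono) auto
      also have "\<dots> = (L * s) * d^2 / 2" by simp
      also have "\<dots> \<le> 1 * d^2 / 2" using Ls by (intro divide_right_mono mult_right_mono) auto
      finally show ?thesis by simp
    qed
    have E0eq: "E 0 = c * F0 + (4 * s / c^2) * G0 / 4 + (sg^2 * a^2 * G0 + 4 * sg * a * k * (g0 \<bullet> e0) + 4 * k^2 * d^2) / 4"
      unfolding E_def F0_def using V0 W0sq assms(12) by simp
    have cross: "sg * a * k * (g0 \<bullet> e0) \<le> 0"
      using ale(1) sgpos kpos ge0 by (simp add: mult_nonpos_nonneg mult_nonneg_nonpos mult_nonneg_nonneg)
    have cross2: "a * (k * (sg * (sg * (sg * (g0 \<bullet> e0))))) \<le> 0"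
    proof -
      have "(sg * sg) * (sg * a * k * (g0 \<bullet> e0)) \<le> 0" by (rule mult_nonneg_nonpos[OF _ cross]) simp
      then show ?thesis by (simp add: algebra_simps)
    qed
    have G0pos: "G0 \<ge> 0" by (simp add: G0_def)
    have sE0: "s * E 0 \<le> c * F0 * s + s^2 * G0 / c^2 + a^2 * (s^2 * G0) / 4 + (k * sg)^2 * d^2"
      unfolding E0eq using ssq cross2
      by (simp add: field_simps power2_eq_square) 
    have b1: "c * F0 * s \<le> c * (d^2 / 2)"
      using F0le cpos by (simp add: mult.commute mult.left_commute mult_left_mono)
    have b2: "s^2 * G0 / c^2 \<le> d^2"
    proof -
      have cc: "1 \<le> c^2" using c1 by (simp add: one_le_power)
      have "s^2 * G0 / c^2 \<le> s^2 * G0 / 1"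
        using cc G0pos by (intro divide_left_mono) auto
      then have "s^2 * G0 / c^2 \<le> s^2 * G0" by simp
      then show ?thesis using G0le by simp
    qed
    have b3: "a^2 * (s^2 * G0) / 4 \<le> c * (a^2 * d^2) / 4"
    proof -
      have "a^2 * (s^2 * G0) \<le> a^2 * d^2" using G0le by (intro mult_left_mono) auto
      also have "\<dots> \<le> c * (a^2 * d^2)"
        using mult_right_mono[OF c1(1), of "a^2 * d^2"] by simp
      finally show ?thesis by simp
    qed
    have b4: "(k * sg)^2 * d^2 \<le> (c - 1) * d^2"
    proof -
      have "(k * sg)^2 \<le> k * sg" using ks1 kpos sgpos by (simp add: power2_eq_square mult_le_cancel_right1)
      then show ?thesis by (intro mult_right_mono) (auto simp: c_def)
    qed
    have "s * E 0 \<le> c * d^2 * (3 / 2 + a^2 / 4)"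
      using sE0 b1 b2 b3 b4 by (simp add: algebra_simps)
    also have "\<dots> \<le> c * d^2 * ((3 + (2 - beta)^2) / 2)"
    proof (rule mult_left_mono)
      have "(2 - beta)^2 \<ge> 0" by simp
      have gen: "3 / 2 + p / 4 \<le> (3 + q) / 2" if "0 \<le> q" "p \<le> q" for p q :: real using that by (simp add: field_simps)
      show "3 / 2 + a^2 / 4 \<le> (3 + (2 - beta)^2) / 2" by (rule gen[OF \<open>(2 - beta)^2 \<ge> 0\<close> ale(2)])
    qed (use cpos in simp)
    finally have "s * E 0 \<le> c * d^2 * ((3 + (2 - beta)^2) / 2)" .
    then show ?thesis using assms(7) by (simp add: d_def e0_def field_simps)
  qed
  have "f (X t) - f xs \<le> E 0 * exp (- (k / 4) * t) / c"
    using lowE divide_right_mono[OF gron, of c] c1 by simp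
  also have "\<dots> \<le> c * ((3 + (2 - beta)\<^sup>2) / (2 * s) * (norm (x0 - xs))\<^sup>2) * exp (- (k / 4) * t) / c"
    using E0 c1 by (intro divide_right_mono mult_right_mono) auto
  also have "\<dots> = (3 + (2 - beta)\<^sup>2) / (2 * s) * (norm (x0 - xs))\<^sup>2 * exp (- (sqrt mu / 4) * t)"
    using c1 by (simp add: k_def)
  finally show "f (X t) - f xs
           \<le> (3 + (2 - beta)\<^sup>2) / (2 * s) * (norm (x0 - xs))\<^sup>2 * exp (- (sqrt mu / 4) * t)" .
qed

end
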